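(* Let $N\ge2$, $J\ge2$, $M=\binom N2\binom J2$, and let $\mathbf{A}$ (an $M\times NJ$ matrix), $\mathbf{G}$ (an $NJ\times K$ matrix), $\mathbf{F}=\mathbf{A}\mathbf{G}$, and $\mathbf{d}=\mathbf{A}\mathbf{y}$ be as described in the context, with $E[\mathbf{d}]=\mathbf{F}\boldsymbol\theta$ for the effect vector $\boldsymbol\theta\in\mathbb{R}^K$. Let $\mathbf{v}\in\mathbb{R}^K$ and $\theta_e=\mathbf{v}^T\boldsymbol\theta$. Call a fixed weight vector $\mathbf{w}\in\mathbb{R}^M$ (and the estimator $\hat\theta=\mathbf{w}^T\mathbf{d}$) unbiased for $\theta_e$ if $\mathbf{F}^T\mathbf{w}=\mathbf{v}$, i.e. $E[\mathbf{w}^T\mathbf{d}]=\mathbf{v}^T\boldsymbol\theta$ for every $\boldsymbol\theta\in\mathbb{R}^K$; two weight vectors $\mathbf{w}_1,\mathbf{w}_2$ define the same estimator iff $\mathbf{A}^T\mathbf{w}_1=\mathbf{A}^T\mathbf{w}_2$. Then: (i) if $\operatorname{rank}(\mathbf{F}^T\mid\mathbf{v})>\operatorname{rank}(\mathbf{F}^T)$, there is no estimator of the form $\mathbf{w}^T\mathbf{d}$ that is unbiased for $\theta_e$; (ii) if $\operatorname{rank}(\mathbf{F}^T\mid\mathbf{v})=\operatorname{rank}(\mathbf{F}^T)=M$, there is a unique unbiased estimator of this form, given by the unique $\mathbf{w}$ solving $\mathbf{F}^T\mathbf{w}=\mathbf{v}$; (iii) if $\operatorname{rank}(\mathbf{F}^T\mid\mathbf{v})=\operatorname{rank}(\mathbf{F}^T)<M$,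 there are infinitely many weight vectors $\mathbf{w}$ giving unbiased estimators, and the set of distinct such estimators $\{\mathbf{A}^T\mathbf{w}:\mathbf{F}^T\mathbf{w}=\mathbf{v}\}$ is an affine subspace of $\mathbb{R}^{NJ}$ of dimension $(N-1)(J-1)-\operatorname{rank}(\mathbf{F})$.
   Context: Setting: $N$ units, $J$ periods, fixed treatment indicators $X_{ij}\in\{0,1\}$ with staggered adoption ($X_{ij}\le X_{i,j+1}$), $T_i=\min\{j:X_{ij}=1\}$, units ordered so $T_1\le\dots\le T_N$. $\mathbf{y}\in\mathbb{R}^{NJ}$ lists outcomes $Y_{ij}$ ordered by $i$ then $j$. The rows of $\mathbf{A}$ are indexed by quadruples $(i,i',j,j')$ with $1\le i<i'\le N$, $1\le j<j'\le J$; row $(i,i',j,j')$ has $+1$ in columns $(i,j')$ and $(i',j)$, $-1$ in columns $(i,j)$ and $(i',j')$, and $0$ elsewhere, so $\mathbf{d}$ has entries $D_{i,i',j,j'}=(Y_{ij'}-Y_{ij})-(Y_{i'j'}-Y_{i'j})$. An assumption setting assigns to each treated cell $(i,j)$ ($X_{ij}=1$) a label: S1: $(i,j,j-T_i+1)$; S2: $(j,j-T_i+1)$; S3: $j-T_i+1$; S4: $j$; S5: one common label. $\boldsymbol\theta\in\mathbb{R}^K$ lists the treatment effects for the $K$ distinct labels of treated cells; $\mathbf{G}$ has $((i,j),\ell)$ entry $1$ if $X_{ij}=1$ and cell $(i,j)$ has label $\ell$, $0$ otherwise. $(\mathbf{F}^T\mid\mathbf{v})$ denotes the augmented matrix obtained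 by appending column $\mathbf{v}$ to $\mathbf{F}^T$. *)

theory Defs
  imports "Jordan_Normal_Form.DL_Rank" "HOL-Library.Extended_Nat"
begin

text \<open>Units i = 1..N, periods j = 1..J (1-based). X i j is the treatment indicator.\<close>

definition staggered :: "nat \<Rightarrow> nat \<Rightarrow> (nat \<Rightarrow> nat \<Rightarrow> bool) \<Rightarrow> bool" where
  "staggered N J X \<longleftrightarrow> (\<forall>i\<in>{1..N}. \<forall>j\<in>{1..<J}. X i j \<longrightarrow> X i (Suc j))"

definition adopt :: "nat \<Rightarrow> (nat \<Rightarrow> nat \<Rightarrow> bool) \<Rightarrow> nat \<Rightarrow> enat" where
  "adopt J X i = (if \<exists>j\<in>{1..J}. X i j then enat (LEAST j. j \<in> {1..J} \<and> X i j) else \<infinity>)"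

definition units_ordered :: "nat \<Rightarrow> nat \<Rightarrow> (nat \<Rightarrow> nat \<Rightarrow> bool) \<Rightarrow> bool" where
  "units_ordered N J X \<longleftrightarrow> (\<forall>i\<in>{1..N}. \<forall>i'\<in>{1..N}. i \<le> i' \<longrightarrow> adopt J X i \<le> adopt J X i')"

text \<open>Adoption time as a natural number (only used for treated cells).\<close>
definition Tn :: "nat \<Rightarrow> (nat \<Rightarrow> nat \<Rightarrow> bool) \<Rightarrow> nat \<Rightarrow> nat" where
  "Tn J X i = (LEAST j. j \<in> {1..J} \<and> X i j)"

datatype setting = S1 | S2 | S3 | S4 | S5

text \<open>Labels are encoded injectively (per setting) as triples of naturals; unused
  components are 0. Note that the event time j - T_i + 1 is at least 1 on treated cells.\<close>
fun label :: "setting \<Rightarrow> nat \<Rightarrow> (nat \<Rightarrow> nat \<Rightarrow> bool) \<Rightarrow> nat \<Rightarrow> nat \<Rightarrow> nat \<times> nat \<times> nat" where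
  "label S1 J X i j = (i, j, j - Tn J X i + 1)"
| "label S2 J X i j = (0, j, j - Tn J X i + 1)"
| "label S3 J X i j = (0, 0, j - Tn J X i + 1)"
| "label S4 J X i j = (0, j, 0)"
| "label S5 J X i j = (0, 0, 0)"

definition labels :: "setting \<Rightarrow> nat \<Rightarrow> nat \<Rightarrow> (nat \<Rightarrow> nat \<Rightarrow> bool) \<Rightarrow> (nat \<times> nat \<times> nat) list" where
  "labels s N J X = remdups [label s J X i j. i \<leftarrow> [1..<Suc N], j \<leftarrow> [1..<Suc J], X i j]"

definition Kdim :: "setting \<Rightarrow> nat \<Rightarrow> nat \<Rightarrow> (nat \<Rightarrow> nat \<Rightarrow> bool) \<Rightarrow> nat" where
  "Kdim s N J X = length (labels s N J X)"

text \<open>Column index of cell (i,j), cells ordered by i then j (0-based index).\<close>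
definition cidx :: "nat \<Rightarrow> nat \<Rightarrow> nat \<Rightarrow> nat" where
  "cidx J i j = (i - 1) * J + (j - 1)"

definition quads :: "nat \<Rightarrow> nat \<Rightarrow> (nat \<times> nat \<times> nat \<times> nat) list" where
  "quads N J = [(i, i', j, j'). i \<leftarrow> [1..<Suc N], i' \<leftarrow> [Suc i..<Suc N],
                                 j \<leftarrow> [1..<Suc J], j' \<leftarrow> [Suc j..<Suc J]]"

definition Mdim :: "nat \<Rightarrow> nat \<Rightarrow> nat" where
  "Mdim N J = (N choose 2) * (J choose 2)"

definition Amat :: "nat \<Rightarrow> nat \<Rightarrow> real mat" where
  "Amat N J = mat (Mdim N J) (N * J) (\<lambda>(r, c).
     (case quads N J ! r of (i, i', j, j') \<Rightarrow>
        if c = cidx J i j' \<or> c = cidx J i' j then 1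
        else if c = cidx J i j \<or> c = cidx J i' j' then -1
        else 0))"

definition Gmat :: "setting \<Rightarrow> nat \<Rightarrow> nat \<Rightarrow> (nat \<Rightarrow> nat \<Rightarrow> bool) \<Rightarrow> real mat" where
  "Gmat s N J X = mat (N * J) (Kdim s N J X) (\<lambda>(c, l).
     (let i = c div J + 1; j = c mod J + 1 in
      if X i j \<and> label s J X i j = labels s N J X ! l then 1 else 0))"

definition Fmat :: "setting \<Rightarrow> nat \<Rightarrow> nat \<Rightarrow> (nat \<Rightarrow> nat \<Rightarrow> bool) \<Rightarrow> real mat" where
  "Fmat s N J X = Amat N J * Gmat s N J X"

definition mrank :: "real mat \<Rightarrow> nat" where
  "mrank B = vec_space.rank (dim_row B) B"

definition augment :: "real mat \<Rightarrow> real vec \<Rightarrow> real mat" where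
  "augment B v = mat_of_cols (dim_row B) (cols B @ [v])"

definition affine_subspace_of_dim :: "nat \<Rightarrow> real vec set \<Rightarrow> nat \<Rightarrow> bool" where
  "affine_subspace_of_dim n S d \<longleftrightarrow>
     (\<exists>a \<in> carrier_vec n. \<exists>W. VectorSpace.subspace class_ring W (module_vec TYPE(real) n) \<and>
        S = (\<lambda>w. a + w) ` W \<and>
        vectorspace.fin_dim class_ring ((module_vec TYPE(real) n)\<lparr>carrier := W\<rparr>) \<and>
        vectorspace.dim class_ring ((module_vec TYPE(real) n)\<lparr>carrier := W\<rparr>) = d)"

definition unbiased :: "setting \<Rightarrow> nat \<Rightarrow> nat \<Rightarrow> (nat \<Rightarrow> nat \<Rightarrow> bool) \<Rightarrow> real vec \<Rightarrow> real vec \<Rightarrow> bool" where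
  "unbiased s N J X v w \<longleftrightarrow> w \<in> carrier_vec (Mdim N J) \<and> transpose_mat (Fmat s N J X) *\<^sub>v w = v"

end

theory Submission
  imports Defs
begin



abbreviation VS :: "nat \<Rightarrow> real vec set \<Rightarrow> (real, real vec) module" where
  "VS n S \<equiv> (module_vec TYPE(real) n)\<lparr>carrier := S\<rparr>"

definition dimS :: "nat \<Rightarrow> real vec set \<Rightarrow> nat" where
  "dimS n S = vectorspace.dim class_ring (VS n S)"

definition subsp :: "nat \<Rightarrow> real vec set \<Rightarrow> bool" where
  "subsp n S = VectorSpace.subspace class_ring S (module_vec TYPE(real) n)"

lemma subsp_vs: "subsp n S \<Longrightarrow> vectorspace class_ring (VS n S)"
proof -
  interpret vec_space "TYPE(real)" n .
  show "subsp n S \<Longrightarrow> vectorspace class_ring (VS n S)" unfolding subsp_def using subspace_is_vs by blast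
qed

lemma subsp_fin_dim:
  assumes "subsp n S"
  shows "vectorspace.fin_dim class_ring (VS n S)"
proof -
  interpret V: vec_space "TYPE(real)" n .
  interpret W: vectorspace class_ring "VS n S" using subsp_vs[OF assms] .
  have sub: "submodule class_ring S (module_vec TYPE(real) n)" using assms unfolding subsp_def subspace_def by auto
  have Sc: "S \<subseteq> carrier_vec n" using sub unfolding submodule_def by auto
  let ?P = "\<lambda>T. T \<subseteq> carrier (VS n S) \<and> W.lin_indpt T"
  have bound: "finite T \<and> card T \<le> n" if "?P T" for T
  proof -
    have "T \<subseteq> S" using that by simp
    hence "V.lin_indpt T" using that V.span_li_not_depend(2)[OF _ sub] by auto
    thus ?thesis using V.li_le_dim[of T] \<open>T \<subseteq> S\<close> Sc V.dim_is_n by auto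
  qed
  have "?P {}" unfolding W.lin_dep_def by auto
  then obtain A where "finite A" "maximal A ?P" using maximal_exists[of ?P n "{}"] bound by blast
  hence "W.gen_set A" using W.max_li_is_gen by blast
  thus ?thesis unfolding W.fin_dim_def using \<open>finite A\<close> \<open>maximal A ?P\<close> unfolding maximal_def by blast
qed

lemma VS_VS[simp]: "(VS n T)\<lparr>carrier := S\<rparr> = VS n S" by simp

lemma subsp_sub: "subsp n S \<Longrightarrow> submodule class_ring S (module_vec TYPE(real) n)"
  unfolding subsp_def VectorSpace.subspace_def by auto

lemma subsp_carrier: "subsp n S \<Longrightarrow> S \<subseteq> carrier_vec n"
  using subsp_sub[of n S] unfolding submodule_def by (auto simp: module_vec_simps)

lemma dimS_mono:
  assumes S: "subsp n S" and T: "subsp n T" and ST: "S \<subseteq> T"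
  shows "dimS n S \<le> dimS n T"
proof -
  interpret V: vec_space "TYPE(real)" n .
  interpret WT: vectorspace class_ring "VS n T" using subsp_vs[OF T] .
  have "VectorSpace.subspace class_ring S (VS n T)"
    using V.nested_subspaces[of T S] S T ST unfolding subsp_def by auto
  from WT.subspace_dim[OF this] show ?thesis
    using subsp_fin_dim[OF S] subsp_fin_dim[OF T] unfolding dimS_def by simp
qed

lemma dimS_eq:
  assumes S: "subsp n S" and T: "subsp n T" and ST: "S \<subseteq> T" and d: "dimS n S = dimS n T"
  shows "S = T"
proof -
  interpret V: vec_space "TYPE(real)" n .
  interpret WT: vectorspace class_ring "VS n T" using subsp_vs[OF T] .
  interpret WS: vectorspace class_ring "VS n S" using subsp_vs[OF S] .
  obtain b where b: "finite b" "WS.basis b" using WS.finite_basis_exists subsp_fin_dim[OF S] by blast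
  have cb: "card b = dimS n S" using WS.dim_basis[OF b] unfolding dimS_def by simp
  have bS: "b \<subseteq> S" using b(2) unfolding WS.basis_def by simp
  have liS: "WS.lin_indpt b" using b(2) unfolding WS.basis_def by simp
  have li: "V.lin_indpt b" using liS V.span_li_not_depend(2)[OF bS subsp_sub[OF S]] by simp
  have liT: "WT.lin_indpt b" using li V.span_li_not_depend(2)[of b T] bS ST subsp_sub[OF T] by auto
  have "WT.basis b"
    by (rule WT.dim_li_is_basis, use subsp_fin_dim[OF T] in simp, fact, use bS ST in force, fact,
        use cb d in \<open>simp add: dimS_def\<close>)
  hence "WT.span b = T" unfolding WT.basis_def by simp
  moreover have "WS.span b = S" using b(2) unfolding WS.basis_def by simp
  moreover have "WT.span b = V.span b" using V.span_li_not_depend(1)[of b T] bS ST subsp_sub[OF T] by auto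
  moreover have "WS.span b = V.span b" using V.span_li_not_depend(1)[of b S] bS subsp_sub[OF S] by auto
  ultimately show ?thesis by simp
qed

lemma dimS_carrier: "dimS n (carrier_vec n) = n"
proof -
  interpret V: vec_space "TYPE(real)" n .
  have e: "VS n (carrier_vec n) = module_vec TYPE(real) n" by (simp add: module_vec_def)
  show ?thesis unfolding dimS_def e using V.dim_is_n by simp
qed

lemma subsp_carrier_vec: "subsp n (carrier_vec n)"
  unfolding subsp_def VectorSpace.subspace_def submodule_def
  by (auto simp: vec_vs vec_module module_vec_simps)




lemma mat_linear_map:
  assumes B: "B \<in> carrier_mat k m" and S: "subsp m S"
  shows "linear_map class_ring (VS m S) (module_vec TYPE(real) k) (\<lambda>x. B *\<^sub>v x)"
proof -
  have Sc: "S \<subseteq> carrier_vec m" using subsp_carrier[OF S] .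
  have add: "\<And>x y. x \<in> S \<Longrightarrow> y \<in> S \<Longrightarrow> B *\<^sub>v (x+y) = B *\<^sub>v x + B *\<^sub>v y"
    using Sc B mult_add_distrib_mat_vec by blast
  have sm: "\<And>c x. x \<in> S \<Longrightarrow> B *\<^sub>v (c \<cdot>\<^sub>v x) = c \<cdot>\<^sub>v (B *\<^sub>v x)"
    using Sc B mult_mat_vec by blast
  have cr: "\<And>x. x \<in> S \<Longrightarrow> B *\<^sub>v x \<in> carrier_vec k" using B by (metis carrier_matD(1) carrier_vecI dim_mult_mat_vec)
  have hom: "(\<lambda>x. B *\<^sub>v x) \<in> LinearCombinations.module_hom class_ring (VS m S) (module_vec TYPE(real) k)"
    unfolding LinearCombinations.module_hom_def by (auto simp: module_vec_simps add sm cr)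
  show ?thesis
    using subsp_vs[OF S] vec_vs[of k] hom
    by (intro linear_map.intro mod_hom.intro mod_hom_axioms.intro) (auto simp: vectorspace_def)
qed

lemma rank_nullity_sub:
  assumes B: "B \<in> carrier_mat k m" and S: "subsp m S"
  shows "subsp k ((\<lambda>x. B *\<^sub>v x) ` S)"
    and "dimS k ((\<lambda>x. B *\<^sub>v x) ` S) + dimS m {x \<in> S. B *\<^sub>v x = 0\<^sub>v k} = dimS m S"
proof -
  interpret L: linear_map class_ring "VS m S" "module_vec TYPE(real) k" "\<lambda>x. B *\<^sub>v x"
    using mat_linear_map[OF B S] .
  have im: "L.im = (\<lambda>x. B *\<^sub>v x) ` S" unfolding L.im_def by simp
  have ker: "L.ker = {x \<in> S. B *\<^sub>v x = 0\<^sub>v k}" unfolding L.ker_def by (simp add: module_vec_simps)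
  show "subsp k ((\<lambda>x. B *\<^sub>v x) ` S)" using L.imT_is_subspace unfolding im subsp_def .
  show "dimS k ((\<lambda>x. B *\<^sub>v x) ` S) + dimS m {x \<in> S. B *\<^sub>v x = 0\<^sub>v k} = dimS m S"
    using L.rank_nullity[OF subsp_fin_dim[OF S]] unfolding im ker dimS_def by simp
qed

definition imgM :: "real mat \<Rightarrow> nat \<Rightarrow> real vec set" where
  "imgM B m = (\<lambda>x. B *\<^sub>v x) ` carrier_vec m"

definition kerM :: "real mat \<Rightarrow> nat \<Rightarrow> nat \<Rightarrow> real vec set" where
  "kerM B k m = {x \<in> carrier_vec m. B *\<^sub>v x = 0\<^sub>v k}"

lemma rank_img:
  assumes B: "B \<in> carrier_mat k m"
  shows "vec_space.rank k B = dimS k (imgM B m)"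
proof -
  interpret V: vec_space "TYPE(real)" k .
  have "{y \<in> carrier_vec (dim_row B). \<exists>x\<in>carrier_vec (dim_col B). B *\<^sub>v x = y} = imgM B m"
    unfolding imgM_def
  proof (intro equalityI subsetI)
    fix y assume "y \<in> {y \<in> carrier_vec (dim_row B). \<exists>x\<in>carrier_vec (dim_col B). B *\<^sub>v x = y}"
    then obtain x where "x \<in> carrier_vec (dim_col B)" "B *\<^sub>v x = y" by blast
    thus "y \<in> (\<lambda>x. B *\<^sub>v x) ` carrier_vec m" using B by auto
  next
    fix y assume "y \<in> (\<lambda>x. B *\<^sub>v x) ` carrier_vec m"
    then obtain x where x: "x \<in> carrier_vec m" "y = B *\<^sub>v x" by blast
    have "y \<in> carrier_vec (dim_row B)" using x mult_mat_vec_carrier[OF B x(1)] B by simp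
    thus "y \<in> {y \<in> carrier_vec (dim_row B). \<exists>x\<in>carrier_vec (dim_col B). B *\<^sub>v x = y}"
      using x B by auto
  qed
  hence "V.span (set (cols B)) = imgM B m"
    using V.col_space_eq[OF B] unfolding V.col_space_def by simp
  thus ?thesis unfolding V.rank_def dimS_def by simp
qed

lemma subsp_img: "B \<in> carrier_mat k m \<Longrightarrow> subsp k (imgM B m)"
  unfolding imgM_def using rank_nullity_sub(1)[OF _ subsp_carrier_vec] by blast

lemma rank_nullity_mat:
  assumes B: "B \<in> carrier_mat k m"
  shows "vec_space.rank k B + dimS m (kerM B k m) = m"
  using rank_nullity_sub(2)[OF B subsp_carrier_vec] rank_img[OF B] dimS_carrier
  unfolding imgM_def kerM_def by simp

lemma subsp_ker: "B \<in> carrier_mat k m \<Longrightarrow> subsp m (kerM B k m)"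
proof -
  assume B: "B \<in> carrier_mat k m"
  have e: "VS m (carrier_vec m) = module_vec TYPE(real) m" by (simp add: module_vec_def)
  have lm: "linear_map class_ring (module_vec TYPE(real) m) (module_vec TYPE(real) k) (\<lambda>x. B *\<^sub>v x)"
    using mat_linear_map[OF B subsp_carrier_vec] unfolding e .
  interpret L: linear_map class_ring "module_vec TYPE(real) m" "module_vec TYPE(real) k" "\<lambda>x. B *\<^sub>v x"
    by (rule lm)
  have ker: "L.ker = kerM B k m" unfolding L.ker_def kerM_def by (simp add: module_vec_simps)
  have "VectorSpace.subspace class_ring L.ker (module_vec TYPE(real) m)" by (rule L.kerT_is_subspace)
  thus ?thesis unfolding ker subsp_def .
qed

lemma rank_le_dim: "(B :: real mat) \<in> carrier_mat k m \<Longrightarrow> vec_space.rank k B \<le> m"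
  using rank_nullity_mat[of B k m] by linarith

lemma rank_mult_le_left:
  fixes X Y :: "real mat"
  assumes X: "X \<in> carrier_mat k n" and Y: "Y \<in> carrier_mat n m"
  shows "vec_space.rank k (X * Y) \<le> vec_space.rank k X"
proof -
  have e: "imgM (X * Y) m = (\<lambda>x. X *\<^sub>v x) ` imgM Y m"
    unfolding imgM_def image_image using X Y by (intro image_cong refl) simp
  have "imgM Y m \<subseteq> carrier_vec n" unfolding imgM_def using Y by auto
  hence "(\<lambda>x. X *\<^sub>v x) ` imgM Y m \<subseteq> imgM X n" unfolding imgM_def[of X] by (rule image_mono)
  hence "imgM (X * Y) m \<subseteq> imgM X n" using e by simp
  thus ?thesis unfolding rank_img[OF X] rank_img[OF mult_carrier_mat[OF X Y]]
    by (rule dimS_mono[OF subsp_img[OF mult_carrier_mat[OF X Y]] subsp_img[OF X]])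
qed

lemma rank_mult_le_right:
  fixes X Y :: "real mat"
  assumes X: "X \<in> carrier_mat k n" and Y: "Y \<in> carrier_mat n m"
  shows "vec_space.rank k (X * Y) \<le> vec_space.rank n Y"
proof -
  have e: "imgM (X * Y) m = (\<lambda>x. X *\<^sub>v x) ` imgM Y m"
    unfolding imgM_def image_image using X Y by (intro image_cong refl) simp
  have "dimS k ((\<lambda>x. X *\<^sub>v x) ` imgM Y m) \<le> dimS n (imgM Y m)"
    using rank_nullity_sub(2)[OF X subsp_img[OF Y]] by linarith
  thus ?thesis unfolding rank_img[OF Y] rank_img[OF mult_carrier_mat[OF X Y]] e .
qed

lemma mat_vec_zero: "(A :: real mat) \<in> carrier_mat n m \<Longrightarrow> A *\<^sub>v 0\<^sub>v m = 0\<^sub>v n"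
  by (intro eq_vecI) (auto simp: scalar_prod_def)

lemma ker_gram:
  fixes B :: "real mat"
  assumes B: "B \<in> carrier_mat k m"
  shows "kerM (transpose_mat B * B) m m = kerM B k m"
proof
  have Bt: "transpose_mat B \<in> carrier_mat m k" using B by simp
  show "kerM B k m \<subseteq> kerM (transpose_mat B * B) m m"
  proof
    fix x assume "x \<in> kerM B k m"
    hence x: "x \<in> carrier_vec m" and e: "B *\<^sub>v x = 0\<^sub>v k" unfolding kerM_def by auto
    have "(transpose_mat B * B) *\<^sub>v x = transpose_mat B *\<^sub>v (B *\<^sub>v x)"
      using assoc_mult_mat_vec[OF Bt B x] .
    also have "\<dots> = 0\<^sub>v m" unfolding e using mat_vec_zero[OF Bt] .
    finally show "x \<in> kerM (transpose_mat B * B) m m" unfolding kerM_def using x by simp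
  qed
  show "kerM (transpose_mat B * B) m m \<subseteq> kerM B k m"
  proof
    fix x assume "x \<in> kerM (transpose_mat B * B) m m"
    hence x: "x \<in> carrier_vec m" and e: "(transpose_mat B * B) *\<^sub>v x = 0\<^sub>v m" unfolding kerM_def by auto
    have Bx: "B *\<^sub>v x \<in> carrier_vec k" using mult_mat_vec_carrier[OF B x] .
    have "transpose_mat B *\<^sub>v (B *\<^sub>v x) = 0\<^sub>v m" using e B x by simp
    hence "(transpose_mat B *\<^sub>v (B *\<^sub>v x)) \<bullet> x = 0" using x by simp
    hence "(B *\<^sub>v x) \<bullet> (B *\<^sub>v x) = 0" using transpose_vec_mult_scalar[OF B x Bx] by simp
    hence "B *\<^sub>v x = 0\<^sub>v k" using conjugate_square_eq_0_vec[OF Bx] by simp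
    thus "x \<in> kerM B k m" using x unfolding kerM_def by simp
  qed
qed

lemma rank_le_transpose:
  fixes B :: "real mat"
  assumes B: "B \<in> carrier_mat k m"
  shows "vec_space.rank k B \<le> vec_space.rank m (transpose_mat B)"
proof -
  have Bt: "transpose_mat B \<in> carrier_mat m k" using B by simp
  have G: "transpose_mat B * B \<in> carrier_mat m m" using B by simp
  have "vec_space.rank m (transpose_mat B * B) = vec_space.rank k B"
    using rank_nullity_mat[OF G] rank_nullity_mat[OF B] ker_gram[OF B] by simp
  thus ?thesis using rank_mult_le_left[OF Bt B] by simp
qed

lemma rank_transpose:
  fixes B :: "real mat"
  assumes B: "B \<in> carrier_mat k m"
  shows "vec_space.rank m (transpose_mat B) = vec_space.rank k B"
  using rank_le_transpose[OF B] rank_le_transpose[of "transpose_mat B" m k] B by simp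




abbreviation vspan :: "nat \<Rightarrow> real vec set \<Rightarrow> real vec set" where
  "vspan n S \<equiv> LinearCombinations.module.span class_ring (module_vec TYPE(real) n) S"

lemma subsp_span: "S \<subseteq> carrier_vec n \<Longrightarrow> subsp n (vspan n S)"
proof -
  interpret V: vec_space "TYPE(real)" n .
  show "S \<subseteq> carrier_vec n \<Longrightarrow> subsp n (V.span S)" unfolding subsp_def using V.span_is_subspace by simp
qed

lemma rank_span: "vec_space.rank n B = dimS n (vspan n (set (cols B)))"
proof -
  interpret V: vec_space "TYPE(real)" n .
  show ?thesis unfolding V.rank_def dimS_def by simp
qed

lemma zero_subsp: "subsp n {0\<^sub>v n}" and dimS_zero: "dimS n {0\<^sub>v n} = 0"
proof -
  interpret V: vec_space "TYPE(real)" n .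
  have e: "V.span {} = {0\<^sub>v n}" using V.span_empty by simp
  show "subsp n {0\<^sub>v n}" using subsp_span[of "{}" n] e by simp
  show "dimS n {0\<^sub>v n}= 0" using V.dim_zero_vs e unfolding dimS_def by simp
qed

lemma dimS_0_iff:
  assumes S: "subsp n S"
  shows "dimS n S = 0 \<longleftrightarrow> S = {0\<^sub>v n}"
proof
  assume d: "dimS n S = 0"
  have "0\<^sub>v n \<in> S" using subsp_sub[OF S] unfolding submodule_def by (auto simp: module_vec_simps)
  hence "{0\<^sub>v n} \<subseteq> S" by simp
  thus "S = {0\<^sub>v n}" using dimS_eq[OF zero_subsp S] d dimS_zero by simp
next
  assume "S = {0\<^sub>v n}" thus "dimS n S = 0" using dimS_zero by simp
qed

lemma span_cols_img:
  assumes B: "B \<in> carrier_mat k m"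
  shows "vspan k (set (cols B)) = imgM B m"
proof -
  interpret V: vec_space "TYPE(real)" k .
  have "{y \<in> carrier_vec (dim_row B). \<exists>x\<in>carrier_vec (dim_col B). B *\<^sub>v x = y} = imgM B m"
    unfolding imgM_def
  proof (intro equalityI subsetI)
    fix y assume "y \<in> {y \<in> carrier_vec (dim_row B). \<exists>x\<in>carrier_vec (dim_col B). B *\<^sub>v x = y}"
    then obtain x where "x \<in> carrier_vec (dim_col B)" "B *\<^sub>v x = y" by blast
    thus "y \<in> (\<lambda>x. B *\<^sub>v x) ` carrier_vec m" using B by auto
  next
    fix y assume "y \<in> (\<lambda>x. B *\<^sub>v x) ` carrier_vec m"
    then obtain x where x: "x \<in> carrier_vec m" "y = B *\<^sub>v x" by blast
    have "y \<in> carrier_vec (dim_row B)" using x mult_mat_vec_carrier[OF B x(1)] B by simp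
    thus "y \<in> {y \<in> carrier_vec (dim_row B). \<exists>x\<in>carrier_vec (dim_col B). B *\<^sub>v x = y}"
      using x B by auto
  qed
  thus "V.span (set (cols B)) = imgM B m"
    using V.col_space_eq[OF B] unfolding V.col_space_def by simp
qed

lemma aug_rank_eq_iff:
  fixes B :: "real mat"
  assumes B: "B \<in> carrier_mat k m" and v: "v \<in> carrier_vec k"
  shows "mrank (augment B v) = mrank B \<longleftrightarrow> (\<exists>w \<in> carrier_vec m. B *\<^sub>v w = v)"
proof -
  interpret V: vec_space "TYPE(real)" k .
  have cB: "set (cols B) \<subseteq> carrier_vec k" using B cols_dim by blast
  have cA: "set (cols B @ [v]) \<subseteq> carrier_vec k" using cB v by simp
  have colsA: "cols (augment B v) = cols B @ [v]" unfolding augment_def using cA B by simp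
  have rowA: "dim_row (augment B v) = k" unfolding augment_def using B by simp
  have rA: "mrank (augment B v) = dimS k (V.span (insert v (set (cols B))))"
    unfolding mrank_def rowA rank_span colsA by simp
  have rB: "mrank B = dimS k (V.span (set (cols B)))"
    unfolding mrank_def rank_span using B by simp
  have cs: "V.span (set (cols B)) = (\<lambda>x. B *\<^sub>v x) ` carrier_vec m"
    using span_cols_img[OF B] unfolding imgM_def .
  have ci: "insert v (set (cols B)) \<subseteq> carrier_vec k" using cB v by simp
  have sub1: "V.span (set (cols B)) \<subseteq> V.span (insert v (set (cols B)))"
    using V.span_is_monotone[OF subset_insertI] .
  show ?thesis
  proof (rule iffI)
    assume a: "mrank (augment B v) = mrank B"
    have "V.span (set (cols B)) = V.span (insert v (set (cols B)))"
      by (rule dimS_eq[OF subsp_span[OF cB] subsp_span[OF ci] sub1]) (use a rA rB in argo)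
    moreover have "v \<in> V.span (insert v (set (cols B)))" using V.in_own_span[OF ci] by blast
    ultimately have "v \<in> (\<lambda>x. B *\<^sub>v x) ` carrier_vec m" using cs by argo
    thus "\<exists>w \<in> carrier_vec m. B *\<^sub>v w = v" by blast
  next
    assume "\<exists>w \<in> carrier_vec m. B *\<^sub>v w = v"
    hence "v \<in> (\<lambda>x. B *\<^sub>v x) ` carrier_vec m" by blast
    hence vin: "v \<in> V.span (set (cols B))" using cs by argo
    have "insert v (set (cols B)) \<subseteq> V.span (set (cols B))" using vin V.in_own_span[OF cB] by blast
    hence "V.span (insert v (set (cols B))) \<subseteq> V.span (set (cols B))"
      by (rule V.span_is_subset) (rule V.span_is_submodule[OF cB])
    hence "V.span (insert v (set (cols B))) = V.span (set (cols B))" using sub1 by (rule antisym)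
    thus "mrank (augment B v) = mrank B" using rA rB by argo
  qed
qed




lemma sum_minus_choose: "(\<Sum>x\<in>{1..<Suc n}. n - x) = n choose 2"
proof (induction n)
  case 0 thus ?case by simp
next
  case (Suc n)
  have e: "{1..<Suc (Suc n)} = insert (Suc n) {1..<Suc n}" by auto
  have "(\<Sum>x\<in>{1..<Suc (Suc n)}. Suc n - x) = (\<Sum>x\<in>{1..<Suc n}. Suc n - x)"
    unfolding e by simp
  also have "\<dots> = (\<Sum>x\<in>{1..<Suc n}. (n - x) + 1)"
    by (rule sum.cong) auto
  also have "\<dots> = (\<Sum>x\<in>{1..<Suc n}. n - x) + (\<Sum>x\<in>{1..<Suc n}. 1)" by (rule sum.distrib)
  also have "\<dots> = (n choose 2) + n" unfolding Suc.IH by simp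
  also have "\<dots> = Suc n choose 2" by (simp add: numeral_2_eq_2)
  finally show ?case .
qed

lemma len_gen:
  assumes "\<And>x y. length (g x y) = c"
  shows "length (concat (map (\<lambda>x. concat (map (g x) [Suc x..<Suc n])) [1..<Suc n])) = (n choose 2) * c"
proof -
  have "length (concat (map (\<lambda>x. concat (map (g x) [Suc x..<Suc n])) [1..<Suc n]))
      = (\<Sum>x\<leftarrow>[1..<Suc n]. (n - x) * c)"
    by (simp add: length_concat o_def assms sum_list_triv del: upt_Suc)
  also have "\<dots> = (\<Sum>x\<in>{1..<Suc n}. (n - x) * c)"
    by (simp add: sum_list_distinct_conv_sum_set del: upt_Suc)
  also have "\<dots> = (\<Sum>x\<in>{1..<Suc n}. n - x) * c" by (rule sum_distrib_right[symmetric])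
  also have "\<dots> = (n choose 2) * c" unfolding sum_minus_choose ..
  finally show ?thesis .
qed

lemma quads_unfold: "quads N J = concat (map (\<lambda>i. concat (map (\<lambda>i'. concat (map (\<lambda>j. map (\<lambda>j'. (i, i', j, j')) [Suc j..<Suc J]) [1..<Suc J])) [Suc i..<Suc N])) [1..<Suc N])"
  unfolding quads_def by simp

lemma set_quads: "set (quads N J) = {(i, i', j, j'). 1 \<le> i \<and> i < i' \<and> i' \<le> N \<and> 1 \<le> j \<and> j < j' \<and> j' \<le> J}"
  unfolding quads_unfold set_concat set_map
  apply (auto simp del: upt_Suc)
  subgoal for a aa ab b by (rule bexI[of _ a], rule bexI[of _ aa], rule bexI[of _ ab]) auto
  done

lemma length_quads: "length (quads N J) = Mdim N J"
proof -
  have inner: "length (concat (map (\<lambda>j. map (\<lambda>j'. f j j') [Suc j..<Suc J]) [1..<Suc J])) = J choose 2" for f :: "nat \<Rightarrow> nat \<Rightarrow> 'a"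
    using len_gen[of "\<lambda>j j'. [f j j']" 1 J] by (simp del: upt_Suc)
  show ?thesis unfolding quads_unfold Mdim_def
    by (rule len_gen) (rule inner)
qed

definition rho :: "nat \<Rightarrow> nat \<Rightarrow> nat \<Rightarrow> nat \<Rightarrow> real" where
  "rho J a b c = (if c = cidx J 1 b then 1 else 0) + (if c = cidx J a 1 then 1 else 0)
     - (if c = cidx J 1 1 then 1 else 0) - (if c = cidx J a b then 1 else 0)"

lemma rho_1_left[simp]: "rho J 1 b c = 0" unfolding rho_def by simp
lemma rho_1_right[simp]: "rho J a 1 c = 0" unfolding rho_def by simp

lemma cidx_iff:
  assumes "1 \<le> a" "1 \<le> b" "b \<le> J"
  shows "c = cidx J a b \<longleftrightarrow> (c div J = a - 1 \<and> c mod J = b - 1)"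
proof
  have J: "J > 0" using assms by simp
  have bl: "b - 1 < J" using assms by simp
  assume c: "c = cidx J a b"
  have "c = (b - 1) + (a - 1) * J" unfolding c cidx_def by simp
  thus "c div J = a - 1 \<and> c mod J = b - 1" using J bl by simp
next
  assume "c div J = a - 1 \<and> c mod J = b - 1"
  thus "c = cidx J a b" unfolding cidx_def by (metis add.commute div_mult_mod_eq)
qed

lemma Amat_entry:
  assumes r: "r < Mdim N J" and c: "c < N * J"
  shows "Amat N J $$ (r, c) = (case quads N J ! r of (i, i', j, j') \<Rightarrow>
        if c = cidx J i j' \<or> c = cidx J i' j then 1
        else if c = cidx J i j \<or> c = cidx J i' j' then -1
        else 0)"
  unfolding Amat_def using r c by simp

lemma Amat_carrier: "Amat N J \<in> carrier_mat (Mdim N J) (N * J)"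
  unfolding Amat_def by simp

lemma quads_nth:
  assumes r: "r < Mdim N J"
  obtains i i' j j' where "quads N J ! r = (i, i', j, j')" "1 \<le> i" "i < i'" "i' \<le> N" "1 \<le> j" "j < j'" "j' \<le> J"
proof -
  have "quads N J ! r \<in> set (quads N J)" using r length_quads by simp
  thus ?thesis using that unfolding set_quads by auto
qed

lemma Amat_row:
  assumes r: "r < Mdim N J" and q: "quads N J ! r = (i, i', j, j')"
    and b: "1 \<le> i" "i < i'" "i' \<le> N" "1 \<le> j" "j < j'" "j' \<le> J"
  shows "row (Amat N J) r = vec (N * J) (\<lambda>c. rho J i j c + rho J i' j' c - rho J i j' c - rho J i' j c)"
proof (rule eq_vecI)
  show "dim_vec (row (Amat N J) r) = dim_vec (vec (N * J) (\<lambda>c. rho J i j c + rho J i' j' c - rho J i j' c - rho J i' j c))"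
    using carrier_matD(2)[OF Amat_carrier] by simp
  fix c assume "c < dim_vec (vec (N * J) (\<lambda>c. rho J i j c + rho J i' j' c - rho J i j' c - rho J i' j c))"
  hence c: "c < N * J" by simp
  have e: "row (Amat N J) r $ c = Amat N J $$ (r, c)"
    by (rule index_row(1)) (use carrier_matD[OF Amat_carrier[of N J]] r c in auto)
  show "row (Amat N J) r $ c = vec (N * J) (\<lambda>c. rho J i j c + rho J i' j' c - rho J i j' c - rho J i' j c) $ c"
    unfolding e Amat_entry[OF r c] q using c b
    apply (simp add: rho_def cidx_iff)
    by arith
qed

lemma span_add_mem:
  assumes S: "S \<subseteq> carrier_vec n" and x: "x \<in> vspan n S" and y: "y \<in> vspan n S"
  shows "x + y \<in> vspan n S"
proof -
  interpret V: vec_space "TYPE(real)" n .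
  interpret SM: submodule class_ring "V.span S" "module_vec TYPE(real) n" using V.span_is_submodule[OF S] .
  show ?thesis using SM.m_closed[OF x y] by (simp add: module_vec_simps)
qed

lemma span_smult_mem:
  assumes S: "S \<subseteq> carrier_vec n" and x: "x \<in> vspan n S"
  shows "a \<cdot>\<^sub>v x \<in> vspan n S"
proof -
  interpret V: vec_space "TYPE(real)" n .
  interpret SM: submodule class_ring "V.span S" "module_vec TYPE(real) n" using V.span_is_submodule[OF S] .
  show ?thesis using SM.smult_closed[OF _ x, of a] by (simp add: module_vec_simps class_field_def)
qed

lemma span_zero_mem: "S \<subseteq> carrier_vec n \<Longrightarrow> 0\<^sub>v n \<in> vspan n S"
proof -
  assume S: "S \<subseteq> carrier_vec n"
  interpret V: vec_space "TYPE(real)" n .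
  interpret SM: submodule class_ring "V.span S" "module_vec TYPE(real) n" using V.span_is_submodule[OF S] .
  show ?thesis using SM.zero_closed by (simp add: module_vec_simps)
qed

lemma span_own_mem: "S \<subseteq> carrier_vec n \<Longrightarrow> x \<in> S \<Longrightarrow> x \<in> vspan n S"
proof -
  interpret V: vec_space "TYPE(real)" n .
  show "S \<subseteq> carrier_vec n \<Longrightarrow> x \<in> S \<Longrightarrow> x \<in> V.span S" using V.in_own_span by auto
qed

lemma span_diff_mem:
  assumes S: "S \<subseteq> carrier_vec n" and x: "x \<in> vspan n S" and y: "y \<in> vspan n S"
  shows "x - y \<in> vspan n S"
proof -
  interpret V: vec_space "TYPE(real)" n .
  have yc: "y \<in> carrier_vec n" using V.span_closed[OF S y] by simp
  have xc: "x \<in> carrier_vec n" using V.span_closed[OF S x] by simp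
  have "x - y = x + (-1) \<cdot>\<^sub>v y" using xc yc by (intro eq_vecI) auto
  thus ?thesis using span_add_mem[OF S x span_smult_mem[OF S y]] by simp
qed

definition Pmat :: "nat \<Rightarrow> nat \<Rightarrow> real mat" where
  "Pmat N J = mat ((N - 1) * (J - 1)) (N * J) (\<lambda>(p, c). rho J (p div (J - 1) + 2) (p mod (J - 1) + 2) c)"

lemma Pmat_carrier: "Pmat N J \<in> carrier_mat ((N - 1) * (J - 1)) (N * J)"
  unfolding Pmat_def by simp

lemma pidx:
  fixes a b N J :: nat
  assumes "2 \<le> a" "a \<le> N" "2 \<le> b" "b \<le> J"
  shows "(a - 2) * (J - 1) + (b - 2) < (N - 1) * (J - 1)"
    and "((a - 2) * (J - 1) + (b - 2)) div (J - 1) + 2 = a"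
    and "((a - 2) * (J - 1) + (b - 2)) mod (J - 1) + 2 = b"
proof -
  have bl: "b - 2 < J - 1" using assms by simp
  have "(a - 2) * (J - 1) + (b - 2) < (a - 2) * (J - 1) + (J - 1)" using bl by simp
  also have "\<dots> = (a - 1) * (J - 1)"
  proof -
    have "a - 1 = Suc (a - 2)" using assms by simp
    thus ?thesis by simp
  qed
  also have "\<dots> \<le> (N - 1) * (J - 1)" using assms by simp
  finally show "(a - 2) * (J - 1) + (b - 2) < (N - 1) * (J - 1)" .
  have J: "J - 1 > 0" using assms by simp
  have "((a - 2) * (J - 1) + (b - 2)) div (J - 1) = a - 2" using bl J by simp
  thus "((a - 2) * (J - 1) + (b - 2)) div (J - 1) + 2 = a" using assms by simp
  have "((a - 2) * (J - 1) + (b - 2)) mod (J - 1) = b - 2" using bl J by simp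
  thus "((a - 2) * (J - 1) + (b - 2)) mod (J - 1) + 2 = b" using assms by simp
qed

lemma Pmat_row:
  assumes p: "p < (N - 1) * (J - 1)"
  shows "row (Pmat N J) p = vec (N * J) (rho J (p div (J - 1) + 2) (p mod (J - 1) + 2))"
  unfolding Pmat_def using p by simp

lemma pidx_bounds:
  fixes p N J :: nat
  assumes p: "p < (N - 1) * (J - 1)"
  shows "2 \<le> p div (J - 1) + 2" "p div (J - 1) + 2 \<le> N" "2 \<le> p mod (J - 1) + 2" "p mod (J - 1) + 2 \<le> J"
proof -
  have J: "J - 1 > 0" using p by (cases "J - 1") auto
  have "p div (J - 1) < N - 1" using p J by (simp add: div_less_iff_less_mult)
  thus "p div (J - 1) + 2 \<le> N" by simp
  have "p mod (J - 1) < J - 1" using J by simp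
  thus "p mod (J - 1) + 2 \<le> J" by simp
qed simp_all




lemma rho_Suc0[simp]: "rho J (Suc 0) b c = 0" "rho J a (Suc 0) c = 0"
  unfolding rho_def by simp_all

lemma rowsP_carrier: "set (rows (Pmat N J)) \<subseteq> carrier_vec (N * J)"
  using set_rows_carrier[OF Pmat_carrier] by blast

lemma rowsA_carrier: "set (rows (Amat N J)) \<subseteq> carrier_vec (N * J)"
  using set_rows_carrier[OF Amat_carrier] by blast

lemma colsP_carrier: "set (cols (Pmat N J)) \<subseteq> carrier_vec ((N - 1) * (J - 1))"
  using cols_dim[of "Pmat N J"] carrier_matD(1)[OF Pmat_carrier[of N J]] by simp

lemma row_in_rows: "i < dim_row B \<Longrightarrow> row B i \<in> set (rows B)"
  unfolding rows_def by simp

lemma col_in_cols: "i < dim_col B \<Longrightarrow> col B i \<in> set (cols B)"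
  unfolding cols_def by simp

lemma rho_vec_in_span:
  assumes a: "1 \<le> a" "a \<le> N" and b: "1 \<le> b" "b \<le> J"
  shows "vec (N * J) (rho J a b) \<in> vspan (N * J) (set (rows (Pmat N J)))"
proof (cases "a = 1 \<or> b = 1")
  case True
  hence "vec (N * J) (rho J a b) = 0\<^sub>v (N * J)" by (intro eq_vecI) (auto simp: rho_def)
  thus ?thesis using span_zero_mem[OF rowsP_carrier] by simp
next
  case False
  hence a2: "2 \<le> a" and b2: "2 \<le> b" using a b by auto
  define p where "p = (a - 2) * (J - 1) + (b - 2)"
  have p: "p < (N - 1) * (J - 1)" "p div (J - 1) + 2 = a" "p mod (J - 1) + 2 = b"
    unfolding p_def by (rule pidx[OF a2 a(2) b2 b(2)])+
  have "row (Pmat N J) p = vec (N * J) (rho J a b)" using Pmat_row[OF p(1)] p by simp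
  moreover have "row (Pmat N J) p \<in> set (rows (Pmat N J))"
    by (rule row_in_rows) (use p Pmat_carrier[of N J] in simp)
  ultimately show ?thesis using span_own_mem[OF rowsP_carrier] by metis
qed

lemma rowsA_sub: "set (rows (Amat N J)) \<subseteq> vspan (N * J) (set (rows (Pmat N J)))"
proof
  fix x assume "x \<in> set (rows (Amat N J))"
  then obtain r where r: "r < Mdim N J" and x: "x = row (Amat N J) r"
    unfolding rows_def using Amat_carrier[of N J] by auto
  obtain i i' j j' where q: "quads N J ! r = (i, i', j, j')" and b: "1 \<le> i" "i < i'" "i' \<le> N" "1 \<le> j" "j < j'" "j' \<le> J"
    using quads_nth[OF r] by blast
  let ?R = "\<lambda>a b. vec (N * J) (rho J a b)"
  have "x = (?R i j + ?R i' j') - (?R i j' + ?R i' j)"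
    unfolding x Amat_row[OF r q b] by (intro eq_vecI) auto
  moreover have "?R i j \<in> vspan (N * J) (set (rows (Pmat N J)))" using b by (intro rho_vec_in_span) auto
  moreover have "?R i' j' \<in> vspan (N * J) (set (rows (Pmat N J)))" using b by (intro rho_vec_in_span) auto
  moreover have "?R i j' \<in> vspan (N * J) (set (rows (Pmat N J)))" using b by (intro rho_vec_in_span) auto
  moreover have "?R i' j \<in> vspan (N * J) (set (rows (Pmat N J)))" using b by (intro rho_vec_in_span) auto
  ultimately show "x \<in> vspan (N * J) (set (rows (Pmat N J)))"
    using span_add_mem[OF rowsP_carrier] span_diff_mem[OF rowsP_carrier] by metis
qed

lemma rowsP_sub: "set (rows (Pmat N J)) \<subseteq> set (rows (Amat N J))"
proof
  fix x assume "x \<in> set (rows (Pmat N J))"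
  then obtain p where p: "p < (N - 1) * (J - 1)" and x: "x = row (Pmat N J) p"
    unfolding rows_def using Pmat_carrier[of N J] by auto
  define a where "a = p div (J - 1) + 2"
  define b where "b = p mod (J - 1) + 2"
  have ab: "2 \<le> a" "a \<le> N" "2 \<le> b" "b \<le> J" using pidx_bounds[OF p] unfolding a_def b_def by auto
  have "(1, a, 1, b) \<in> set (quads N J)" unfolding set_quads using ab by auto
  then obtain r where r: "r < length (quads N J)" and q: "quads N J ! r = (1, a, 1, b)"
    by (metis in_set_conv_nth)
  have r': "r < Mdim N J" using r length_quads by simp
  have rr: "row (Amat N J) r = vec (N * J) (\<lambda>c. rho J 1 1 c + rho J a b c - rho J 1 b c - rho J a 1 c)"
    by (rule Amat_row[OF r' q]) (use ab in auto)
  have "row (Amat N J) r = vec (N * J) (rho J a b)"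
    unfolding rr by (intro eq_vecI) auto
  moreover have "x = vec (N * J) (rho J a b)" unfolding x Pmat_row[OF p] a_def b_def ..
  moreover have "row (Amat N J) r \<in> set (rows (Amat N J))"
    by (rule row_in_rows) (use r' Amat_carrier[of N J] in simp)
  ultimately show "x \<in> set (rows (Amat N J))" by simp
qed

lemma cidx_lt:
  assumes "1 \<le> a" "a \<le> N" "1 \<le> b" "b \<le> J"
  shows "cidx J a b < N * J"
proof -
  have "cidx J a b = (a - 1) * J + (b - 1)" unfolding cidx_def ..
  also have "\<dots> < (a - 1) * J + J" using assms by simp
  also have "\<dots> = a * J"
  proof -
    have "a = Suc (a - 1)" using assms by simp
    hence "a * J = (a - 1) * J + J" by (metis mult_Suc add.commute)
    thus ?thesis by simp
  qed
  also have "\<dots> \<le> N * J" using assms by simp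
  finally show ?thesis .
qed

lemma cidx_divmod:
  assumes "1 \<le> a" "1 \<le> b" "b \<le> J"
  shows "cidx J a b div J = a - 1" "cidx J a b mod J = b - 1"
  using cidx_iff[OF assms, of "cidx J a b"] by simp_all

lemma pidx_inj:
  fixes p p' :: nat
  assumes "p div m = p' div m" "p mod m = p' mod m"
  shows "p = p'"
  by (metis assms div_mult_mod_eq)

lemma unit_in_span_colsP:
  assumes p: "p < (N - 1) * (J - 1)"
  shows "unit_vec ((N - 1) * (J - 1)) p \<in> vspan ((N - 1) * (J - 1)) (set (cols (Pmat N J)))"
proof -
  let ?k = "(N - 1) * (J - 1)"
  define a where "a = p div (J - 1) + 2"
  define b where "b = p mod (J - 1) + 2"
  have ab: "2 \<le> a" "a \<le> N" "2 \<le> b" "b \<le> J" using pidx_bounds[OF p] unfolding a_def b_def by auto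
  define c where "c = cidx J a b"
  have c: "c < N * J" unfolding c_def by (rule cidx_lt) (use ab in auto)
  have cdm: "c div J = a - 1" "c mod J = b - 1" unfolding c_def by (rule cidx_divmod; use ab in auto)+
  have "col (Pmat N J) c = (-1) \<cdot>\<^sub>v unit_vec ?k p"
  proof (rule eq_vecI)
    show "dim_vec (col (Pmat N J) c) = dim_vec ((-1) \<cdot>\<^sub>v unit_vec ?k p)" using Pmat_carrier[of N J] by simp
    fix p' assume "p' < dim_vec ((-1) \<cdot>\<^sub>v unit_vec ?k p)"
    hence p': "p' < ?k" by simp
    define a' where "a' = p' div (J - 1) + 2"
    define b' where "b' = p' mod (J - 1) + 2"
    have ab': "2 \<le> a'" "a' \<le> N" "2 \<le> b'" "b' \<le> J" using pidx_bounds[OF p'] unfolding a'_def b'_def by auto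
    have e1: "col (Pmat N J) c $ p' = rho J a' b' c" unfolding Pmat_def a'_def b'_def using c p' by simp
    have e2: "rho J a' b' c = (if a' = a \<and> b' = b then -1 else 0)"
      unfolding rho_def using cidx_iff[of 1 b' J c] cidx_iff[of a' 1 J c] cidx_iff[of 1 1 J c] cidx_iff[of a' b' J c]
        ab ab' cdm by auto
    have e3: "(a' = a \<and> b' = b) \<longleftrightarrow> p' = p"
    proof
      assume "a' = a \<and> b' = b"
      hence "p' div (J - 1) = p div (J - 1)" "p' mod (J - 1) = p mod (J - 1)"
        unfolding a_def b_def a'_def b'_def by simp_all
      thus "p' = p" by (rule pidx_inj)
    qed (simp add: a_def b_def a'_def b'_def)
    show "col (Pmat N J) c $ p' = ((-1) \<cdot>\<^sub>v unit_vec ?k p) $ p'"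
      unfolding e1 e2 using e3 p p' by auto
  qed
  hence "unit_vec ?k p = (-1) \<cdot>\<^sub>v col (Pmat N J) c" by (intro eq_vecI) auto
  moreover have "col (Pmat N J) c \<in> set (cols (Pmat N J))"
    by (rule col_in_cols) (use c Pmat_carrier[of N J] in simp)
  ultimately show ?thesis
    using span_smult_mem[OF colsP_carrier span_own_mem[OF colsP_carrier]] by metis
qed

lemma carrier_sub_span_colsP:
  "carrier_vec ((N - 1) * (J - 1)) \<subseteq> vspan ((N - 1) * (J - 1)) (set (cols (Pmat N J)))"
proof -
  let ?k = "(N - 1) * (J - 1)"
  interpret V: vec_space "TYPE(real)" ?k .
  have "set (unit_vecs ?k) \<subseteq> V.span (set (cols (Pmat N J)))"
    unfolding unit_vecs_def using unit_in_span_colsP by auto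
  hence "V.span (set (unit_vecs ?k)) \<subseteq> V.span (set (cols (Pmat N J)))"
    by (rule V.span_is_subset) (rule V.span_is_submodule[OF colsP_carrier])
  thus ?thesis using V.span_unit_vecs_is_carrier by simp
qed

lemma rank_At: "vec_space.rank (N * J) (transpose_mat (Amat N J)) = (N - 1) * (J - 1)"
proof -
  let ?n = "N * J" and ?k = "(N - 1) * (J - 1)"
  interpret V: vec_space "TYPE(real)" ?n .
  have rA: "vec_space.rank ?n (transpose_mat (Amat N J)) = dimS ?n (vspan ?n (set (rows (Amat N J))))"
    using rank_span[of ?n "transpose_mat (Amat N J)"] by simp
  have rPt: "vec_space.rank ?n (transpose_mat (Pmat N J)) = dimS ?n (vspan ?n (set (rows (Pmat N J))))"
    using rank_span[of ?n "transpose_mat (Pmat N J)"] by simp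
  have rPe: "vec_space.rank ?n (transpose_mat (Pmat N J)) = vec_space.rank ?k (Pmat N J)"
    by (rule rank_transpose[OF Pmat_carrier])
  have rP: "vec_space.rank ?k (Pmat N J) = dimS ?k (vspan ?k (set (cols (Pmat N J))))"
    by (rule rank_span)
  have lo: "?k \<le> vec_space.rank ?k (Pmat N J)"
    unfolding rP using dimS_mono[OF subsp_carrier_vec subsp_span[OF colsP_carrier] carrier_sub_span_colsP]
      dimS_carrier by simp
  have hi: "vec_space.rank ?n (transpose_mat (Pmat N J)) \<le> ?k"
    by (rule rank_le_dim) (use Pmat_carrier[of N J] in simp)
  have s1: "vspan ?n (set (rows (Amat N J))) \<subseteq> vspan ?n (set (rows (Pmat N J)))"
    by (rule V.span_is_subset[OF rowsA_sub]) (rule V.span_is_submodule[OF rowsP_carrier])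
  have s2: "vspan ?n (set (rows (Pmat N J))) \<subseteq> vspan ?n (set (rows (Amat N J)))"
    by (rule V.span_is_monotone[OF rowsP_sub])
  have d1: "dimS ?n (vspan ?n (set (rows (Amat N J)))) \<le> dimS ?n (vspan ?n (set (rows (Pmat N J))))"
    by (rule dimS_mono[OF subsp_span[OF rowsA_carrier] subsp_span[OF rowsP_carrier] s1])
  have d2: "dimS ?n (vspan ?n (set (rows (Pmat N J)))) \<le> dimS ?n (vspan ?n (set (rows (Amat N J))))"
    by (rule dimS_mono[OF subsp_span[OF rowsP_carrier] subsp_span[OF rowsA_carrier] s2])
  show ?thesis using rA rPt rPe lo hi d1 d2 by linarith
qed




lemma vec_diff_zero:
  fixes x y :: "real vec"
  assumes "x \<in> carrier_vec m" "y \<in> carrier_vec m" "x - y = 0\<^sub>v m"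
  shows "x = y"
proof (rule eq_vecI)
  fix i assume i: "i < dim_vec y"
  have dy: "dim_vec y = m" using assms(2) by (rule carrier_vecD)
  have "(x - y) $ i = 0" using assms(3) i dy by simp
  moreover have "(x - y) $ i = x $ i - y $ i" using i by simp
  ultimately show "x $ i = y $ i" by simp
qed (use assms in simp)

lemma sol_diff_ker:
  fixes B :: "real mat"
  assumes B: "B \<in> carrier_mat k m" and w1: "w1 \<in> carrier_vec m" and w2: "w2 \<in> carrier_vec m"
    and e: "B *\<^sub>v w1 = v" "B *\<^sub>v w2 = v"
  shows "w1 - w2 \<in> kerM B k m"
proof -
  have "B *\<^sub>v (w1 - w2) = B *\<^sub>v w1 - B *\<^sub>v w2" using mult_minus_distrib_mat_vec[OF B w1 w2] .
  also have "\<dots> = 0\<^sub>v k" unfolding e using mult_mat_vec_carrier[OF B w1] e(1) by simp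
  finally show ?thesis unfolding kerM_def using w1 w2 by simp
qed

lemma sol_add_ker:
  fixes B :: "real mat"
  assumes B: "B \<in> carrier_mat k m" and w: "w \<in> carrier_vec m" and x: "x \<in> kerM B k m"
    and e: "B *\<^sub>v w = v"
  shows "w + x \<in> carrier_vec m" "B *\<^sub>v (w + x) = v"
proof -
  have xc: "x \<in> carrier_vec m" and x0: "B *\<^sub>v x = 0\<^sub>v k" using x unfolding kerM_def by auto
  show "w + x \<in> carrier_vec m" using w xc by simp
  have "B *\<^sub>v (w + x) = B *\<^sub>v w + B *\<^sub>v x" using mult_add_distrib_mat_vec[OF B w xc] .
  also have "\<dots> = v" unfolding e x0 using mult_mat_vec_carrier[OF B w] e by simp
  finally show "B *\<^sub>v (w + x) = v" .
qed

lemma part_i: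
  fixes B :: "real mat"
  assumes B: "B \<in> carrier_mat k m" and v: "v \<in> carrier_vec k"
    and r: "mrank (augment B v) > mrank B"
  shows "\<not> (\<exists>w \<in> carrier_vec m. B *\<^sub>v w = v)"
  using aug_rank_eq_iff[OF B v] r by auto

lemma ker_zero:
  fixes B :: "real mat"
  assumes B: "B \<in> carrier_mat k m" and r: "vec_space.rank k B = m"
  shows "kerM B k m = {0\<^sub>v m}"
proof -
  have "dimS m (kerM B k m) = 0" using rank_nullity_mat[OF B] r by simp
  thus ?thesis using dimS_0_iff[OF subsp_ker[OF B]] by simp
qed

lemma part_ii:
  fixes B :: "real mat"
  assumes B: "B \<in> carrier_mat k m" and v: "v \<in> carrier_vec k"
    and r: "mrank (augment B v) = mrank B" and f: "vec_space.rank k B = m"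
  shows "\<exists>!w. w \<in> carrier_vec m \<and> B *\<^sub>v w = v"
proof -
  obtain w0 where w0: "w0 \<in> carrier_vec m" "B *\<^sub>v w0 = v" using aug_rank_eq_iff[OF B v] r by auto
  show ?thesis
  proof (rule ex1I[of _ w0])
    show "w0 \<in> carrier_vec m \<and> B *\<^sub>v w0 = v" using w0 by simp
    fix w assume w: "w \<in> carrier_vec m \<and> B *\<^sub>v w = v"
    have "w - w0 \<in> kerM B k m" using sol_diff_ker[OF B _ w0(1)] w w0 by blast
    hence "w - w0 = 0\<^sub>v m" using ker_zero[OF B f] by simp
    thus "w = w0" using vec_diff_zero w w0 by blast
  qed
qed

lemma part_inf:
  fixes B :: "real mat"
  assumes B: "B \<in> carrier_mat k m" and v: "v \<in> carrier_vec k"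
    and r: "mrank (augment B v) = mrank B" and f: "vec_space.rank k B < m"
  shows "infinite {w. w \<in> carrier_vec m \<and> B *\<^sub>v w = v}"
proof -
  obtain w0 where w0: "w0 \<in> carrier_vec m" "B *\<^sub>v w0 = v" using aug_rank_eq_iff[OF B v] r by auto
  have "dimS m (kerM B k m) \<noteq> 0" using rank_nullity_mat[OF B] f by simp
  hence "kerM B k m \<noteq> {0\<^sub>v m}" using dimS_0_iff[OF subsp_ker[OF B]] by simp
  moreover have "0\<^sub>v m \<in> kerM B k m" unfolding kerM_def using mat_vec_zero[OF B] by simp
  ultimately obtain z where z: "z \<in> kerM B k m" "z \<noteq> 0\<^sub>v m" by blast
  have zc: "z \<in> carrier_vec m" and z0: "B *\<^sub>v z = 0\<^sub>v k" using z(1) unfolding kerM_def by auto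
  obtain i where i: "i < m" "z $ i \<noteq> 0"
  proof (rule ccontr)
    assume "\<not> thesis"
    hence "\<forall>i < m. z $ i = 0" using that by blast
    hence "z = 0\<^sub>v m" using zc by (intro eq_vecI) auto
    thus False using z(2) by simp
  qed
  define f where "f = (\<lambda>t::real. w0 + t \<cdot>\<^sub>v z)"
  have tz: "t \<cdot>\<^sub>v z \<in> kerM B k m" for t
  proof -
    have "B *\<^sub>v (t \<cdot>\<^sub>v z) = t \<cdot>\<^sub>v (B *\<^sub>v z)" using mult_mat_vec[OF B zc] .
    also have "\<dots> = 0\<^sub>v k" unfolding z0 by (intro eq_vecI) auto
    finally show ?thesis unfolding kerM_def using zc by simp
  qed
  have sub: "range f \<subseteq> {w. w \<in> carrier_vec m \<and> B *\<^sub>v w = v}"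
    unfolding f_def using sol_add_ker[OF B w0(1) tz w0(2)] by blast
  have "inj f"
  proof (rule injI)
    fix t s assume "f t = f s"
    hence "f t $ i = f s $ i" by simp
    hence "w0 $ i + t * z $ i = w0 $ i + s * z $ i" unfolding f_def using w0 zc i by simp
    thus "t = s" using i(2) by simp
  qed
  hence "infinite (range f)" using finite_imageD infinite_UNIV_char_0 by blast
  thus ?thesis using sub finite_subset by blast
qed

lemma part_aff:
  fixes At Gt Ft :: "real mat"
  assumes At: "At \<in> carrier_mat n m" and Gt: "Gt \<in> carrier_mat k n" and Ft: "Ft = Gt * At"
    and v: "v \<in> carrier_vec k" and r: "mrank (augment Ft v) = mrank Ft"
  shows "affine_subspace_of_dim n {At *\<^sub>v w | w. w \<in> carrier_vec m \<and> Ft *\<^sub>v w = v}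
           (vec_space.rank n At - vec_space.rank k Ft)"
proof -
  have B: "Ft \<in> carrier_mat k m" using Ft Gt At by simp
  obtain w0 where w0: "w0 \<in> carrier_vec m" "Ft *\<^sub>v w0 = v" using aug_rank_eq_iff[OF B v] r by auto
  define W where "W = (\<lambda>x. At *\<^sub>v x) ` kerM Ft k m"
  have sW: "subsp n W" unfolding W_def by (rule rank_nullity_sub(1)[OF At subsp_ker[OF B]])
  have dW: "dimS n W + dimS m {x \<in> kerM Ft k m. At *\<^sub>v x = 0\<^sub>v n} = dimS m (kerM Ft k m)"
    unfolding W_def by (rule rank_nullity_sub(2)[OF At subsp_ker[OF B]])
  have kk: "{x \<in> kerM Ft k m. At *\<^sub>v x = 0\<^sub>v n} = kerM At n m"
  proof (intro equalityI subsetI)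
    fix x assume "x \<in> {x \<in> kerM Ft k m. At *\<^sub>v x = 0\<^sub>v n}"
    thus "x \<in> kerM At n m" unfolding kerM_def by simp
  next
    fix x assume x: "x \<in> kerM At n m"
    hence xc: "x \<in> carrier_vec m" and x0: "At *\<^sub>v x = 0\<^sub>v n" unfolding kerM_def by auto
    have "Ft *\<^sub>v x = Gt *\<^sub>v (At *\<^sub>v x)" unfolding Ft using assoc_mult_mat_vec[OF Gt At xc] .
    also have "\<dots> = 0\<^sub>v k" unfolding x0 by (rule mat_vec_zero[OF Gt])
    finally show "x \<in> {x \<in> kerM Ft k m. At *\<^sub>v x = 0\<^sub>v n}" unfolding kerM_def using xc x0 by simp
  qed
  have dimW: "dimS n W = vec_space.rank n At - vec_space.rank k Ft"
    using dW unfolding kk using rank_nullity_mat[OF At] rank_nullity_mat[OF B] by linarith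
  define a where "a = At *\<^sub>v w0"
  have ac: "a \<in> carrier_vec n" unfolding a_def using mult_mat_vec_carrier[OF At w0(1)] .
  have seteq: "{At *\<^sub>v w | w. w \<in> carrier_vec m \<and> Ft *\<^sub>v w = v} = (\<lambda>u. a + u) ` W"
  proof (intro equalityI subsetI)
    fix y assume "y \<in> {At *\<^sub>v w | w. w \<in> carrier_vec m \<and> Ft *\<^sub>v w = v}"
    then obtain w where w: "w \<in> carrier_vec m" "Ft *\<^sub>v w = v" and y: "y = At *\<^sub>v w" by blast
    have x: "w - w0 \<in> kerM Ft k m" by (rule sol_diff_ker[OF B w(1) w0(1) w(2) w0(2)])
    have "At *\<^sub>v (w - w0) = At *\<^sub>v w - a" unfolding a_def using mult_minus_distrib_mat_vec[OF At w(1) w0(1)] .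
    hence "y = a + At *\<^sub>v (w - w0)" unfolding y using ac mult_mat_vec_carrier[OF At w(1)] carrier_matD[OF At]
      by (intro eq_vecI) auto
    moreover have "At *\<^sub>v (w - w0) \<in> W" unfolding W_def using x by blast
    ultimately show "y \<in> (\<lambda>u. a + u) ` W" by blast
  next
    fix y assume "y \<in> (\<lambda>u. a + u) ` W"
    then obtain x where x: "x \<in> kerM Ft k m" and y: "y = a + At *\<^sub>v x" unfolding W_def by blast
    have xc: "x \<in> carrier_vec m" using x unfolding kerM_def by auto
    have "y = At *\<^sub>v (w0 + x)" unfolding y a_def using mult_add_distrib_mat_vec[OF At w0(1) xc] by simp
    moreover have "w0 + x \<in> carrier_vec m" "Ft *\<^sub>v (w0 + x) = v" using sol_add_ker[OF B w0(1) x w0(2)] by auto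
    ultimately show "y \<in> {At *\<^sub>v w | w. w \<in> carrier_vec m \<and> Ft *\<^sub>v w = v}" by blast
  qed
  show ?thesis unfolding affine_subspace_of_dim_def
  proof (intro bexI[OF _ ac] exI[of _ W] conjI)
    show "VectorSpace.subspace class_ring W (module_vec TYPE(real) n)" using sW unfolding subsp_def .
    show "{At *\<^sub>v w | w. w \<in> carrier_vec m \<and> Ft *\<^sub>v w = v} = (\<lambda>u. a + u) ` W" by (rule seteq)
    show "vectorspace.fin_dim class_ring (VS n W)" by (rule subsp_fin_dim[OF sW])
    show "vectorspace.dim class_ring (VS n W) = vec_space.rank n At - vec_space.rank k Ft"
      using dimW unfolding dimS_def .
  qed
qed

theorem theorem3:
  fixes N J :: nat and X :: "nat \<Rightarrow> nat \<Rightarrow> bool" and s :: setting and v :: "real vec"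
  assumes "N \<ge> 2" and "J \<ge> 2"
    and "staggered N J X" and "units_ordered N J X"
    and "v \<in> carrier_vec (Kdim s N J X)"
  shows
   "(mrank (augment (transpose_mat (Fmat s N J X)) v) > mrank (transpose_mat (Fmat s N J X))
       \<longrightarrow> \<not> (\<exists>w. unbiased s N J X v w))
  \<and> (mrank (augment (transpose_mat (Fmat s N J X)) v) = mrank (transpose_mat (Fmat s N J X))
     \<and> mrank (transpose_mat (Fmat s N J X)) = Mdim N J
       \<longrightarrow> (\<exists>!w. unbiased s N J X v w)
         \<and> (\<exists>!e. \<exists>w. unbiased s N J X v w \<and> e = transpose_mat (Amat N J) *\<^sub>v w))
  \<and> (mrank (augment (transpose_mat (Fmat s N J X)) v) = mrank (transpose_mat (Fmat s N J X))
     \<and> mrank (transpose_mat (Fmat s N J X)) < Mdim N J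
       \<longrightarrow> infinite {w. unbiased s N J X v w}
         \<and> affine_subspace_of_dim (N * J)
              {transpose_mat (Amat N J) *\<^sub>v w | w. unbiased s N J X v w}
              ((N - 1) * (J - 1) - mrank (Fmat s N J X)))"
proof -
  let ?A = "Amat N J" and ?G = "Gmat s N J X" and ?F = "Fmat s N J X"
  let ?K = "Kdim s N J X" and ?M = "Mdim N J" and ?n = "N * J"
  have Ac: "?A \<in> carrier_mat ?M ?n" by (rule Amat_carrier)
  have Gc: "?G \<in> carrier_mat ?n ?K" unfolding Gmat_def by simp
  have Fc: "?F \<in> carrier_mat ?M ?K" unfolding Fmat_def using Ac Gc by simp
  have Atc: "transpose_mat ?A \<in> carrier_mat ?n ?M" using Ac by simp
  have Gtc: "transpose_mat ?G \<in> carrier_mat ?K ?n" using Gc by simp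
  have Ftc: "transpose_mat ?F \<in> carrier_mat ?K ?M" using Fc by simp
  have Fte: "transpose_mat ?F = transpose_mat ?G * transpose_mat ?A"
    unfolding Fmat_def by (rule transpose_mult[OF Ac Gc])
  have v: "v \<in> carrier_vec ?K" by fact
  have rFt: "mrank (transpose_mat ?F) = vec_space.rank ?K (transpose_mat ?F)"
    unfolding mrank_def using Ftc by simp
  have rF: "mrank ?F = vec_space.rank ?K (transpose_mat ?F)"
    unfolding mrank_def using Fc rank_transpose[OF Fc] by simp
  have rA: "vec_space.rank ?n (transpose_mat ?A) = (N - 1) * (J - 1)" by (rule rank_At)
  have ub: "unbiased s N J X v w \<longleftrightarrow> w \<in> carrier_vec ?M \<and> transpose_mat ?F *\<^sub>v w = v" for w
    unfolding unbiased_def ..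
  show ?thesis
  proof (intro conjI impI)
    assume "mrank (augment (transpose_mat ?F) v) > mrank (transpose_mat ?F)"
    thus "\<not> (\<exists>w. unbiased s N J X v w)" using part_i[OF Ftc v] unfolding ub by blast
  next
    assume h: "mrank (augment (transpose_mat ?F) v) = mrank (transpose_mat ?F) \<and> mrank (transpose_mat ?F) = ?M"
    have u: "\<exists>!w. w \<in> carrier_vec ?M \<and> transpose_mat ?F *\<^sub>v w = v"
      by (rule part_ii[OF Ftc v]) (use h rFt in auto)
    thus "\<exists>!w. unbiased s N J X v w" unfolding ub .
    from u obtain w0 where w0: "w0 \<in> carrier_vec ?M \<and> transpose_mat ?F *\<^sub>v w0 = v"
      and uq: "\<And>w. w \<in> carrier_vec ?M \<and> transpose_mat ?F *\<^sub>v w = v \<Longrightarrow> w = w0" by blast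
    show "\<exists>!e. \<exists>w. unbiased s N J X v w \<and> e = transpose_mat ?A *\<^sub>v w"
    proof (rule ex1I[of _ "transpose_mat ?A *\<^sub>v w0"])
      show "\<exists>w. unbiased s N J X v w \<and> transpose_mat ?A *\<^sub>v w0 = transpose_mat ?A *\<^sub>v w"
        using w0 unfolding ub by blast
      fix e assume "\<exists>w. unbiased s N J X v w \<and> e = transpose_mat ?A *\<^sub>v w"
      then obtain w where "unbiased s N J X v w" "e = transpose_mat ?A *\<^sub>v w" by blast
      thus "e = transpose_mat ?A *\<^sub>v w0" using uq unfolding ub by blast
    qed
  next
    assume h: "mrank (augment (transpose_mat ?F) v) = mrank (transpose_mat ?F) \<and> mrank (transpose_mat ?F) < ?M"
    have "infinite {w. w \<in> carrier_vec ?M \<and> transpose_mat ?F *\<^sub>v w = v}"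
      by (rule part_inf[OF Ftc v]) (use h rFt in auto)
    thus "infinite {w. unbiased s N J X v w}" unfolding ub .
  next
    assume h: "mrank (augment (transpose_mat ?F) v) = mrank (transpose_mat ?F) \<and> mrank (transpose_mat ?F) < ?M"
    have "affine_subspace_of_dim ?n {transpose_mat ?A *\<^sub>v w | w. w \<in> carrier_vec ?M \<and> transpose_mat ?F *\<^sub>v w = v}
           (vec_space.rank ?n (transpose_mat ?A) - vec_space.rank ?K (transpose_mat ?F))"
      by (rule part_aff[OF Atc Gtc Fte v]) (use h in auto)
    thus "affine_subspace_of_dim ?n {transpose_mat ?A *\<^sub>v w | w. unbiased s N J X v w}
           ((N - 1) * (J - 1) - mrank ?F)"
      unfolding ub rA rF .
  qed
qed


end
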